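(* Let $N, D_1, D_2$ be positive integers. Let $f^{[n]}_{\mathrm{DINOv2}}$ ($n=1,\dots,N$) map images to $\mathbb{R}^{D_1}$ (patch features of a pretrained DINOv2 encoder), let $\mathrm{DiffEnc}^{[n]}$ ($n=1,\dots,N$) map images to $\mathbb{R}^{D_2}$ (the $n$-th patch token of a diffusion model's hidden representation at timestep $t=0$), and let $g_\phi:\mathbb{R}^{D_2}\to\mathbb{R}^{D_1}$ be a projection head. Assume all feature embeddings in the DINOv2 embedding space are $\ell_2$-normalized, i.e. $\|f^{[n]}_{\mathrm{DINOv2}}(u)\|_2 = 1$ and $\|g_\phi(\mathrm{DiffEnc}^{[n]}(u))\|_2=1$ for all images $u$ and all $n$. Let $x\sim p_X$ be a ground-truth image, $\hat x \sim p_{\hat X\mid Y}$ its reconstruction produced by any reconstruction method (with marginal law $p_{\hat X}$), and $\bar x\sim p_{\bar X}$ a proxy approximation of $x$, all random variables on a common probability space. Define $$\mathrm{REPA}(\bar x,\hat x)=\frac1N\sum_{n=1}^N \cos\!\Big(f^{[n]}_{\mathrm{DINOv2}}(\bar x),\, g_\phi\big(\mathrm{DiffEnc}^{[n]}(\hat x)\big)\Big),\qquad \mu_f(u)=\frac1N\sum_{n=1}^N f^{[n]}_{\mathrm{DINOv2}}(u),$$ $$\mathrm{ApproxErr}(x,\bar x)=\frac1N\sum_{n=1}^N\big\|f^{[n]}_{\mathrm{DINOv2}}(x)-f^{[n]}_{\mathrm{DINOv2}}(\bar x)\big\|_2^2,\qquad \mathrm{MisREPA}(u)=\frac1N\sum_{n=1}^N\big\|f^{[n]}_{\mathrm{DINOv2}}(u)-g_\phi\big(\mathrm{DiffEnc}^{[n]}(u)\big)\big\|_2^2,$$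 and $\mathrm{MMD}_{\mathrm{DINOv2}}(p_X,p_{\hat X})=\big\|\mathbb{E}_x[\mu_f(x)]-\mathbb{E}_{\hat x}[\mu_f(\hat x)]\big\|_2^2$. Then $$\mathbb{E}_{\hat x,\bar x}\big[\mathrm{REPA}(\bar x,\hat x)\big]\le 1-\frac18\,\mathrm{MMD}_{\mathrm{DINOv2}}(p_X,p_{\hat X})+\frac12\,\mathbb{E}_{x,\bar x}\big[\mathrm{ApproxErr}(x,\bar x)\big]+\frac14\,\mathbb{E}_{\hat x}\big[\mathrm{MisREPA}(\hat x)\big].$$
   Context: $\cos(a,b)=\langle a,b\rangle/(\|a\|_2\|b\|_2)$. Images are elements of a fixed Euclidean space; $f_{\mathrm{DINOv2}}$, $\mathrm{DiffEnc}$, $g_\phi$ are fixed measurable maps, and all expectations are assumed finite (they are, since all features considered are unit vectors or bounded). The expectations are taken under the joint law of $(x,\bar x,\hat x)$. *)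

theory Defs
  imports "HOL-Probability.Probability"
begin

definition cos_sim :: "'a::real_inner \<Rightarrow> 'a \<Rightarrow> real" where
  "cos_sim a b = inner a b / (norm a * norm b)"

definition REPA ::
  "nat \<Rightarrow> (nat \<Rightarrow> 'i \<Rightarrow> 'b::real_inner) \<Rightarrow> (nat \<Rightarrow> 'i \<Rightarrow> 'c) \<Rightarrow> ('c \<Rightarrow> 'b)
     \<Rightarrow> 'i \<Rightarrow> 'i \<Rightarrow> real" where
  "REPA N f enc g xbar xhat =
     (1 / real N) * (\<Sum>n=1..N. cos_sim (f n xbar) (g (enc n xhat)))"

definition mu_f :: "nat \<Rightarrow> (nat \<Rightarrow> 'i \<Rightarrow> 'b::real_vector) \<Rightarrow> 'i \<Rightarrow> 'b" where
  "mu_f N f u = (1 / real N) *\<^sub>R (\<Sum>n=1..N. f n u)"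

definition ApproxErr :: "nat \<Rightarrow> (nat \<Rightarrow> 'i \<Rightarrow> 'b::real_normed_vector) \<Rightarrow> 'i \<Rightarrow> 'i \<Rightarrow> real" where
  "ApproxErr N f x xbar = (1 / real N) * (\<Sum>n=1..N. (norm (f n x - f n xbar))\<^sup>2)"

definition MisREPA ::
  "nat \<Rightarrow> (nat \<Rightarrow> 'i \<Rightarrow> 'b::real_normed_vector) \<Rightarrow> (nat \<Rightarrow> 'i \<Rightarrow> 'c) \<Rightarrow> ('c \<Rightarrow> 'b) \<Rightarrow> 'i \<Rightarrow> real" where
  "MisREPA N f enc g u = (1 / real N) * (\<Sum>n=1..N. (norm (f n u - g (enc n u)))\<^sup>2)"

definition MMD_DINOv2 ::
  "'w measure \<Rightarrow> nat \<Rightarrow> (nat \<Rightarrow> 'i \<Rightarrow> 'b::euclidean_space) \<Rightarrow> ('w \<Rightarrow> 'i) \<Rightarrow> ('w \<Rightarrow> 'i) \<Rightarrow> real" where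
  "MMD_DINOv2 M N f X Xhat =
     (norm ((\<integral>\<omega>. mu_f N f (X \<omega>) \<partial>M) - (\<integral>\<omega>. mu_f N f (Xhat \<omega>) \<partial>M)))\<^sup>2"

end

theory Submission
  imports Defs
begin

lemma sq3: fixes a b c d :: real assumes "0 \<le> a" "0\<le>b" "0\<le>c" "d \<le> a + b + c" "0 \<le> d"
  shows "d^2 \<le> 4*a^2 + 4*b^2 + 2*c^2"
proof -
  have "d^2 \<le> (a+b+c)^2" using assms by (simp add: power_mono)
  also have "\<dots> \<le> 4*a^2 + 4*b^2 + 2*c^2"
    using sum_squares_ge_zero[of "a+b-c" "a-b"]
    by (smt (verit) power2_sum power2_diff mult_nonneg_nonneg zero_le_power2)
  finally show ?thesis .
qed

lemma tri3: fixes A Ab G H :: "'b::real_normed_vector"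
  shows "(norm (A - H))^2 \<le> 4*(norm (A - Ab))^2 + 4*(norm (Ab - G))^2 + 2*(norm (G - H))^2"
proof (rule sq3)
  have "A - H = (A - Ab) + (Ab - G) + (G - H)" by simp
  then show "norm (A - H) \<le> norm (A - Ab) + norm (Ab - G) + norm (G - H)"
    by (metis norm_triangle_ineq order_trans add_right_mono)
qed auto

lemma cos_unit: fixes a b :: "'b::real_inner" assumes "norm a = 1" "norm b = 1"
  shows "cos_sim a b = 1 - (norm (a - b))^2 / 2"
proof -
  have "a \<bullet> a = 1" "b \<bullet> b = 1" using assms by (metis power2_norm_eq_inner one_power2)+
  then show ?thesis
    using assms by (simp add: cos_sim_def power2_norm_eq_inner inner_diff_left inner_diff_right inner_commute field_simps)
qed

lemma pw:
  fixes f :: "nat \<Rightarrow> 'i \<Rightarrow> 'b::euclidean_space" and enc :: "nat \<Rightarrow> 'i \<Rightarrow> 'c" and g :: "'c \<Rightarrow> 'b"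
  assumes N: "N \<ge> 1"
    and nf: "\<And>n u. n \<in> {1..N} \<Longrightarrow> norm (f n u) = 1"
    and ng: "\<And>n u. n \<in> {1..N} \<Longrightarrow> norm (g (enc n u)) = 1"
  shows "REPA N f enc g xb xh \<le> 1 - (1/8) * (norm (mu_f N f x - mu_f N f xh))^2
           + (1/2) * ApproxErr N f x xb + (1/4) * MisREPA N f enc g xh"
proof -
  define a where "a n = norm (f n x - f n xb)" for n
  define b where "b n = norm (f n xb - g (enc n xh))" for n
  define c where "c n = norm (g (enc n xh) - f n xh)" for n
  define d where "d n = norm (f n x - f n xh)" for n
  have Npos: "real N > 0" using N by simp
  have R: "REPA N f enc g xb xh = 1 - (1/(2*real N)) * (\<Sum>n=1..N. (b n)^2)"
  proof -
    have "(\<Sum>n=1..N. cos_sim (f n xb) (g (enc n xh))) = (\<Sum>n=1..N. 1 - (b n)^2/2)"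
      by (rule sum.cong) (auto simp: b_def cos_unit nf ng)
    also have "\<dots> = real N - (\<Sum>n=1..N. (b n)^2)/2"
      by (simp add: sum_subtractf sum_divide_distrib)
    finally show ?thesis using Npos by (simp add: REPA_def field_simps)
  qed
  have AE: "ApproxErr N f x xb = (1/real N) * (\<Sum>n=1..N. (a n)^2)" by (simp add: ApproxErr_def a_def)
  have MR: "MisREPA N f enc g xh = (1/real N) * (\<Sum>n=1..N. (c n)^2)"
    by (simp add: MisREPA_def c_def norm_minus_commute)
  have "mu_f N f x - mu_f N f xh = (1/real N) *\<^sub>R (\<Sum>n=1..N. f n x - f n xh)"
    by (simp add: mu_f_def sum_subtractf scaleR_diff_right)
  then have "norm (mu_f N f x - mu_f N f xh) \<le> (1/real N) * (\<Sum>n=1..N. d n)"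
    using Npos by (simp add: d_def norm_sum divide_right_mono)
  then have "(norm (mu_f N f x - mu_f N f xh))^2 \<le> ((1/real N) * (\<Sum>n=1..N. d n))^2"
    by (simp add: power_mono)
  also have "\<dots> = (1/real N)^2 * (\<Sum>n=1..N. d n)^2" by (simp add: power_mult_distrib power_divide)
  also have "\<dots> \<le> (1/real N)^2 * ((\<Sum>n=1..N. (d n)^2) * real N)"
    using sum_squared_le_sum_of_squares[of d "{1..N}"] by (intro mult_left_mono) auto
  also have "\<dots> = (1/real N) * (\<Sum>n=1..N. (d n)^2)" using Npos by (simp add: power2_eq_square)
  also have "\<dots> \<le> (1/real N) * (\<Sum>n=1..N. 4*(a n)^2 + 4*(b n)^2 + 2*(c n)^2)"
    using Npos by (intro mult_left_mono sum_mono) (auto simp: a_def b_def c_def d_def tri3)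
  also have "\<dots> = (1/real N) * (4*(\<Sum>n=1..N. (a n)^2) + 4*(\<Sum>n=1..N. (b n)^2) + 2*(\<Sum>n=1..N. (c n)^2))"
    by (simp add: sum.distrib sum_distrib_left)
  finally have K: "(norm (mu_f N f x - mu_f N f xh))^2 \<le> \<dots>" .
  define t where "t = 1 / real N"
  have R': "REPA N f enc g xb xh = 1 - (t/2) * (\<Sum>n=1..N. (b n)^2)" using R by (simp add: t_def)
  show ?thesis unfolding R' AE MR t_def[symmetric] using K[folded t_def]
    by (simp add: algebra_simps)
qed

lemma cosb: fixes a b :: "'b::real_inner" assumes "norm a = 1" "norm b = 1"
  shows "\<bar>cos_sim a b\<bar> \<le> 1"
  using Cauchy_Schwarz_ineq2[of a b] assms by (simp add: cos_sim_def)

theorem proposition1: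
  fixes M :: "'w measure"
    and N :: nat
    and f :: "nat \<Rightarrow> 'i::euclidean_space \<Rightarrow> 'b::euclidean_space"
    and enc :: "nat \<Rightarrow> 'i \<Rightarrow> 'c::euclidean_space"
    and g :: "'c \<Rightarrow> 'b"
    and X Xbar Xhat :: "'w \<Rightarrow> 'i"
  assumes "prob_space M"
    and "N \<ge> 1"
    and "\<And>n. n \<in> {1..N} \<Longrightarrow> f n \<in> borel_measurable borel"
    and "\<And>n. n \<in> {1..N} \<Longrightarrow> enc n \<in> borel_measurable borel"
    and "g \<in> borel_measurable borel"
    and "X \<in> borel_measurable M"
    and "Xbar \<in> borel_measurable M"
    and "Xhat \<in> borel_measurable M"
    and "\<And>n u. n \<in> {1..N} \<Longrightarrow> norm (f n u) = 1"
    and "\<And>n u. n \<in> {1..N} \<Longrightarrow> norm (g (enc n u)) = 1"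
  shows "(\<integral>\<omega>. REPA N f enc g (Xbar \<omega>) (Xhat \<omega>) \<partial>M)
           \<le> 1 - (1/8) * MMD_DINOv2 M N f X Xhat
               + (1/2) * (\<integral>\<omega>. ApproxErr N f (X \<omega>) (Xbar \<omega>) \<partial>M)
               + (1/4) * (\<integral>\<omega>. MisREPA N f enc g (Xhat \<omega>) \<partial>M)"
proof -
  interpret P: prob_space M by fact
  note fm = measurable_compose[OF _ assms(3)]
  note em = measurable_compose[OF _ assms(4)]
  have gm: "(\<lambda>w. g (enc n (Y w))) \<in> borel_measurable M" if "n \<in> {1..N}" "Y \<in> borel_measurable M" for n Y
    using measurable_compose[OF em[OF that(2) that(1)] assms(5)] .
  have fmY: "(\<lambda>w. f n (Y w)) \<in> borel_measurable M" if "n \<in> {1..N}" "Y \<in> borel_measurable M" for n Y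
    using fm[OF that(2) that(1)] .
  have Npos: "real N > 0" using assms(2) by simp
  define R where "R w = REPA N f enc g (Xbar w) (Xhat w)" for w
  define Z where "Z w = mu_f N f (X w) - mu_f N f (Xhat w)" for w
  define Ap where "Ap w = ApproxErr N f (X w) (Xbar w)" for w
  define Mi where "Mi w = MisREPA N f enc g (Xhat w)" for w
  have muM: "(\<lambda>w. mu_f N f (Y w)) \<in> borel_measurable M" if "Y \<in> borel_measurable M" for Y
    unfolding mu_f_def using fmY[OF _ that] by (intro borel_measurable_scaleR borel_measurable_sum) auto
  have mub: "norm (mu_f N f u) \<le> 1" for u
  proof -
    have "norm (\<Sum>n=1..N. f n u) \<le> (\<Sum>n=1..N. norm (f n u))" by (rule norm_sum)
    also have "\<dots> = real N" using assms(9) by simp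
    finally show ?thesis using Npos by (simp add: mu_f_def)
  qed
  have intmu: "integrable M (\<lambda>w. mu_f N f (Y w))" if "Y \<in> borel_measurable M" for Y
    by (rule P.integrable_const_bound[where B=1]) (auto simp: mub muM that)
  have ZM: "Z \<in> borel_measurable M" unfolding Z_def using muM assms(6,8) by auto
  have Zb: "norm (Z w) \<le> 2" for w
    unfolding Z_def using mub[of "X w"] mub[of "Xhat w"] norm_triangle_ineq4 by (smt (verit))
  have intZ2: "integrable M (\<lambda>w. (norm (Z w))^2)"
  proof (rule P.integrable_const_bound[where B=4])
    show "AE w in M. norm ((norm (Z w))^2) \<le> 4"
    proof (intro AE_I2)
      fix w have "(norm (Z w))^2 \<le> 2^2" using Zb[of w] by (intro power_mono) auto
      then show "norm ((norm (Z w))^2) \<le> 4" by simp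
    qed
  qed (use ZM in measurable)
  have intZn: "integrable M (\<lambda>w. norm (Z w))"
    by (rule P.integrable_const_bound[where B=2]) (use Zb ZM in auto)
  have RM: "R \<in> borel_measurable M" unfolding R_def REPA_def cos_sim_def
    using fmY[OF _ assms(7)] gm[OF _ assms(8)]
    by (intro borel_measurable_times borel_measurable_const borel_measurable_sum) auto
  have ApM: "Ap \<in> borel_measurable M" unfolding Ap_def ApproxErr_def
    using fmY[OF _ assms(7)] fmY[OF _ assms(6)]
    by (intro borel_measurable_times borel_measurable_const borel_measurable_sum) auto
  have MiM: "Mi \<in> borel_measurable M" unfolding Mi_def MisREPA_def
    using fmY[OF _ assms(8)] gm[OF _ assms(8)]
    by (intro borel_measurable_times borel_measurable_const borel_measurable_sum) auto
  have avgb: "\<bar>(1/real N) * (\<Sum>n=1..N. h n)\<bar> \<le> B" if "\<And>n. n \<in> {1..N} \<Longrightarrow> \<bar>h n\<bar> \<le> B" for h B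
  proof -
    have "\<bar>\<Sum>n=1..N. h n\<bar> \<le> (\<Sum>n=1..N. \<bar>h n\<bar>)" by (rule sum_abs)
    also have "\<dots> \<le> (\<Sum>n=1..N. B)" using that by (rule sum_mono)
    finally show ?thesis using Npos by (simp add: abs_mult field_simps)
  qed
  have sqb: "(norm (u - v))^2 \<le> 4" if "norm u = 1" "norm v = 1" for u v :: 'b
  proof -
    have "norm (u - v) \<le> 2" using norm_triangle_ineq4[of u v] that by simp
    then have "(norm (u - v))^2 \<le> 2^2" by (intro power_mono) auto
    then show ?thesis by simp
  qed
  have intR: "integrable M R"
  proof (rule P.integrable_const_bound[where B=1])
    show "AE w in M. norm (R w) \<le> 1"
      unfolding R_def REPA_def
      by (intro AE_I2, simp only: real_norm_def, rule avgb)
         (auto simp: cosb assms(9,10))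
  qed (fact RM)
  have intAp: "integrable M Ap"
  proof (rule P.integrable_const_bound[where B=4])
    show "AE w in M. norm (Ap w) \<le> 4"
      unfolding Ap_def ApproxErr_def
      by (intro AE_I2, simp only: real_norm_def, rule avgb) (auto simp: sqb assms(9))
  qed (fact ApM)
  have intMi: "integrable M Mi"
  proof (rule P.integrable_const_bound[where B=4])
    show "AE w in M. norm (Mi w) \<le> 4"
      unfolding Mi_def MisREPA_def
      by (intro AE_I2, simp only: real_norm_def, rule avgb) (auto simp: sqb assms(9,10))
  qed (fact MiM)
  have MMD: "MMD_DINOv2 M N f X Xhat = (norm (integral\<^sup>L M Z))^2"
    unfolding MMD_DINOv2_def Z_def
    by (subst Bochner_Integration.integral_diff) (auto intro: intmu assms(6,8))
  have "norm (integral\<^sup>L M Z) \<le> (\<integral>w. norm (Z w) \<partial>M)" by (rule integral_norm_bound)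
  then have "(norm (integral\<^sup>L M Z))^2 \<le> (\<integral>w. norm (Z w) \<partial>M)^2"
    by (simp add: power_mono)
  also have "\<dots> \<le> (\<integral>w. (norm (Z w))^2 \<partial>M)"
  proof -
    have "0 \<le> P.variance (\<lambda>w. norm (Z w))" by (rule integral_nonneg_AE) auto
    then show ?thesis using P.variance_eq[OF intZn intZ2] by simp
  qed
  finally have J: "MMD_DINOv2 M N f X Xhat \<le> (\<integral>w. (norm (Z w))^2 \<partial>M)" unfolding MMD .
  have "(\<integral>w. R w \<partial>M) \<le> (\<integral>w. 1 - (1/8) * (norm (Z w))^2 + (1/2) * Ap w + (1/4) * Mi w \<partial>M)"
  proof (rule integral_mono)
    show "integrable M R" by (fact intR)
    show "integrable M (\<lambda>w. 1 - (1/8) * (norm (Z w))^2 + (1/2) * Ap w + (1/4) * Mi w)"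
      using intZ2 intAp intMi by auto
    show "R w \<le> 1 - (1/8) * (norm (Z w))^2 + (1/2) * Ap w + (1/4) * Mi w" for w
      unfolding R_def Z_def Ap_def Mi_def by (rule pw) (use assms in auto)
  qed
  also have "\<dots> = 1 - (1/8) * (\<integral>w. (norm (Z w))^2 \<partial>M) + (1/2) * (\<integral>w. Ap w \<partial>M) + (1/4) * (\<integral>w. Mi w \<partial>M)"
    using intZ2 intAp intMi by (simp add: P.prob_space)
  finally show ?thesis using J unfolding R_def Ap_def Mi_def by simp
qed

end
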